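(* Let $I\subset\mathbb{R}$ be an open interval, $W\subset I$ a countable dense subset, $\mathrm{gr}\colon W\to\mathbb{N}$ a grading with finite fibers, $K>1$, and give the fractured interval $\check I$ the division metric $d$ with steepness $K$. Suppose there are constants $M,\alpha>0$ with $\mathrm{gap}(r)\ge M r^\alpha$ for all $r>0$. Let $X$ be a metric space and $f\colon\check I\to X$ a function with $f = \tilde f\circ\pi|_{\check I}$ for some $\tilde f\colon I\to X$ (equivalently, $f(w^L)=f(w^R)$ for all $w\in W$). If $f$ is Hölder with exponent $\nu>0$ and constant $C$ (i.e. $d_X(f(s),f(t))\le C\,d(s,t)^\nu$), then $\tilde f$ is Hölder with exponent $\nu/\alpha$ with respect to the Euclidean metric on $I$: $d_X(\tilde f(a),\tilde f(b))\le \frac{2C}{M^{\nu/\alpha}}|b-a|^{\nu/\alpha}$ for all $a,b\in I$.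
   Context: The divided interval of $I$ at $W$ is $\hat I = \{w^{L}, \hat w, w^{R} : w\in W\}\sqcup (I\smallsetminus W)$, with $\pi\colon\hat I\to I$ sending $w^L,\hat w,w^R$ to $w$ and fixing $I\smallsetminus W$, totally ordered so that $\pi$ is order preserving and $w^L<\hat w<w^R$. For $a,b\in\hat I\cup\{\pm\infty\}$, $(a,b)=\{s: a<s<b\}$; basis intervals are the nonempty $(a,b)$ other than those with $a=w^L$ or $b=w^R$, and they generate the topology. The fractured interval is $\check I=\hat I\smallsetminus\{\hat w:w\in W\}$. The height of $\hat w$ is $K^{-\mathrm{gr}(w)}$, all other points have height $0$; the division metric is $d(a,b)=$ maximum height of points of $(a,b)\subset\hat I$ for $a<b$ in $\check I$. Let $W_{\ge r}=\{w\in W: K^{-\mathrm{gr}(w)}\ge r\}$ and $\mathrm{gap}(r)$ be the minimum Euclidean distance between distinct points of $W_{\ge r}$ (with $\mathrm{gap}(r)=+\infty$ if $W_{\ge r}$ has fewer than two points). *)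

theory Defs
  imports "HOL-Analysis.Analysis"
begin

text \<open>Points of the divided interval are pairs (x, s): for w in W the three
points w^L, w-hat, w^R are (w,SL), (w,SM), (w,SR); a point x of I outside W
is represented by (x,SM).\<close>

datatype side = SL | SM | SR

fun side_rank :: "side \<Rightarrow> nat" where
  "side_rank SL = 0" | "side_rank SM = 1" | "side_rank SR = 2"

definition divided_interval :: "real set \<Rightarrow> real set \<Rightarrow> (real \<times> side) set" where
  "divided_interval I W = {(x, s). x \<in> I \<and> (x \<in> W \<or> s = SM)}"

definition fractured_interval :: "real set \<Rightarrow> real set \<Rightarrow> (real \<times> side) set" where
  "fractured_interval I W = {(x, s). x \<in> I \<and> (if x \<in> W then s \<noteq> SM else s = SM)}"

definition proj :: "real \<times> side \<Rightarrow> real" where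
  "proj p = fst p"

definition div_less :: "real \<times> side \<Rightarrow> real \<times> side \<Rightarrow> bool" where
  "div_less p q \<longleftrightarrow> fst p < fst q \<or> (fst p = fst q \<and> side_rank (snd p) < side_rank (snd q))"

definition height :: "real \<Rightarrow> real set \<Rightarrow> (real \<Rightarrow> nat) \<Rightarrow> real \<times> side \<Rightarrow> real" where
  "height K W gr p = (if fst p \<in> W \<and> snd p = SM then K powr (- real (gr (fst p))) else 0)"

text \<open>Division metric: for a < b, the maximum height of points of the open
interval (a,b) of the divided interval (this maximum exists; we write it as a Sup).\<close>
definition div_dist_ord ::
  "real \<Rightarrow> real set \<Rightarrow> real set \<Rightarrow> (real \<Rightarrow> nat) \<Rightarrow> real \<times> side \<Rightarrow> real \<times> side \<Rightarrow> real" where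
  "div_dist_ord K I W gr a b =
     Sup (height K W gr ` {p \<in> divided_interval I W. div_less a p \<and> div_less p b})"

definition div_dist ::
  "real \<Rightarrow> real set \<Rightarrow> real set \<Rightarrow> (real \<Rightarrow> nat) \<Rightarrow> real \<times> side \<Rightarrow> real \<times> side \<Rightarrow> real" where
  "div_dist K I W gr a b =
     (if div_less a b then div_dist_ord K I W gr a b
      else if div_less b a then div_dist_ord K I W gr b a else 0)"

definition W_ge :: "real \<Rightarrow> real set \<Rightarrow> (real \<Rightarrow> nat) \<Rightarrow> real \<Rightarrow> real set" where
  "W_ge K W gr r = {w \<in> W. K powr (- real (gr w)) \<ge> r}"

text \<open>gap(r): minimum distance between distinct points of W_{>=r}; +infinity if
there are fewer than two points (Inf of the empty set in ereal).\<close>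
definition gap :: "real \<Rightarrow> real set \<Rightarrow> (real \<Rightarrow> nat) \<Rightarrow> real \<Rightarrow> ereal" where
  "gap K W gr r = Inf {ereal \<bar>u - v\<bar> | u v. u \<in> W_ge K W gr r \<and> v \<in> W_ge K W gr r \<and> u \<noteq> v}"

end

theory Submission
  imports Defs
begin

lemma height_le1:
  assumes "K > (1::real)"
  shows "height K W gr p \<le> 1"
proof -
  have "K powr (- real n) \<le> 1" for n
    using assms by (smt (verit, ccfv_threshold) of_nat_0_le_iff powr_eq_one_iff powr_less_one)
  then show ?thesis unfolding height_def by auto
qed

lemma mid_in: "is_interval (I::real set) \<Longrightarrow> x \<in> I \<Longrightarrow> y \<in> I \<Longrightarrow> x < y \<Longrightarrow> (x+y)/2 \<in> I"
  by (rule is_interval_1[THEN iffD1, rule_format, of I x y]) auto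

definition rpt :: "real set \<Rightarrow> real \<Rightarrow> real \<times> side" where
  "rpt W x = (x, if x \<in> W then SR else SM)"
definition lpt :: "real set \<Rightarrow> real \<Rightarrow> real \<times> side" where
  "lpt W x = (x, if x \<in> W then SL else SM)"

lemma between_fst:
  assumes "p \<in> divided_interval I W" "div_less (rpt W x) p" "div_less p (lpt W y)"
  shows "x < fst p \<and> fst p < y"
  using assms unfolding divided_interval_def div_less_def rpt_def lpt_def
  by (cases "snd p"; auto split: if_splits)

lemma dd_le:
  assumes "x < y" "x \<in> I" "y \<in> I" "is_interval I" "r > 0"
    "\<forall>w\<in>W. x < w \<and> w < y \<longrightarrow> K powr (- real (gr w)) < r"
  shows "div_dist_ord K I W gr (rpt W x) (lpt W y) \<le> r"
proof -
  let ?S = "{p \<in> divided_interval I W. div_less (rpt W x) p \<and> div_less p (lpt W y)}"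
  have "(x+y)/2 \<in> I" using mid_in assms(1-4) by blast
  then have "((x+y)/2, SM) \<in> ?S" using assms(1)
    unfolding divided_interval_def div_less_def rpt_def lpt_def by auto
  then have ne: "height K W gr ` ?S \<noteq> {}" by blast
  have "\<forall>z\<in>height K W gr ` ?S. z \<le> r"
  proof
    fix z assume "z \<in> height K W gr ` ?S"
    then obtain p where p: "p \<in> ?S" "z = height K W gr p" by blast
    then have "x < fst p \<and> fst p < y" using between_fst by blast
    then show "z \<le> r" using p assms(5,6) unfolding height_def by auto
  qed
  then show ?thesis unfolding div_dist_ord_def using ne by (meson cSup_least)
qed

lemma dd_pos:
  assumes "x < y" "w \<in> W" "x < w" "w < y" "K > 1" "W \<subseteq> I"
  shows "div_dist_ord K I W gr (rpt W x) (lpt W y) \<ge> K powr (- real (gr w))"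
proof -
  let ?S = "{p \<in> divided_interval I W. div_less (rpt W x) p \<and> div_less p (lpt W y)}"
  have "(w, SM) \<in> ?S" using assms
    unfolding divided_interval_def div_less_def rpt_def lpt_def by auto
  moreover have "bdd_above (height K W gr ` ?S)"
    using height_le1[OF assms(5)] by (meson bdd_aboveI2)
  ultimately have "height K W gr (w,SM) \<le> Sup (height K W gr ` ?S)"
    by (meson cSup_upper imageI)
  then show ?thesis unfolding div_dist_ord_def height_def using assms(2) by simp
qed

lemma rpt_frac: "x \<in> I \<Longrightarrow> rpt W x \<in> fractured_interval I W"
  unfolding rpt_def fractured_interval_def by auto
lemma lpt_frac: "x \<in> I \<Longrightarrow> lpt W x \<in> fractured_interval I W"
  unfolding lpt_def fractured_interval_def by auto
lemma rl_less: "x < y \<Longrightarrow> div_less (rpt W x) (lpt W y)"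
  unfolding rpt_def lpt_def div_less_def by auto

theorem theorem3p10:
  fixes I W :: "real set" and gr :: "real \<Rightarrow> nat" and K M \<alpha> \<nu> C :: real
    and f :: "real \<times> side \<Rightarrow> 'x::metric_space" and ft :: "real \<Rightarrow> 'x"
  assumes I_open: "open I" and I_int: "is_interval I"
    and W_sub: "W \<subseteq> I" and W_count: "countable W" and W_dense: "I \<subseteq> closure W"
    and gr_fib: "\<And>n. finite {w \<in> W. gr w = n}"
    and K_gt: "K > 1"
    and M_pos: "M > 0" and \<alpha>_pos: "\<alpha> > 0"
    and gap_bd: "\<And>r. r > 0 \<Longrightarrow> gap K W gr r \<ge> ereal (M * r powr \<alpha>)"
    and f_fac: "\<And>p. p \<in> fractured_interval I W \<Longrightarrow> f p = ft (proj p)"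
    and \<nu>_pos: "\<nu> > 0"
    and holder: "\<And>s t. s \<in> fractured_interval I W \<Longrightarrow> t \<in> fractured_interval I W \<Longrightarrow>
                   dist (f s) (f t) \<le> C * (div_dist K I W gr s t) powr \<nu>"
  shows "\<forall>a\<in>I. \<forall>b\<in>I. dist (ft a) (ft b) \<le> 2 * C / M powr (\<nu> / \<alpha>) * \<bar>b - a\<bar> powr (\<nu> / \<alpha>)"
proof -
  have ftr: "ft x = f (rpt W x)" if "x \<in> I" for x
    using f_fac[OF rpt_frac[OF that]] by (simp add: proj_def rpt_def)
  have ftl: "ft x = f (lpt W x)" if "x \<in> I" for x
    using f_fac[OF lpt_frac[OF that]] by (simp add: proj_def lpt_def)
  have dd: "div_dist K I W gr (rpt W x) (lpt W y) = div_dist_ord K I W gr (rpt W x) (lpt W y)"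
    if "x < y" for x y using rl_less[OF that] unfolding div_dist_def by simp
  have gapl: "M * r powr \<alpha> \<le> \<bar>u - v\<bar>" if "r > 0" "u \<in> W_ge K W gr r" "v \<in> W_ge K W gr r" "u \<noteq> v" for r u v
  proof -
    have "gap K W gr r \<le> ereal \<bar>u - v\<bar>" unfolding gap_def using that by (intro Inf_lower) blast
    then show ?thesis using gap_bd[OF that(1)] by (metis ereal_less_eq(3) order_trans)
  qed
  have est: "dist (ft x) (ft y) \<le> C * r powr \<nu>"
    if xy: "x < y" "x \<in> I" "y \<in> I" "r > 0" "C \<ge> 0"
       "\<forall>w\<in>W. x < w \<and> w < y \<longrightarrow> K powr (- real (gr w)) < r" for x y r
  proof -
    let ?d = "div_dist_ord K I W gr (rpt W x) (lpt W y)"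
    have le: "?d \<le> r" using dd_le[OF xy(1-3) I_int xy(4,6)] .
    obtain w where w: "w \<in> W" "x < w" "w < y"
    proof -
      have "(x+y)/2 \<in> I" using mid_in xy(1-3) I_int by blast
      then have "(x+y)/2 \<in> closure W" using W_dense by auto
      then obtain w where "w \<in> W" "dist w ((x+y)/2) < (y-x)/2"
        using xy(1) unfolding closure_approachable by (metis diff_gt_0_iff_gt half_gt_zero)
      moreover from this(2) have "x < w" by (auto simp: dist_real_def abs_less_iff field_simps)
      moreover from calculation(2) have "w < y" by (auto simp: dist_real_def abs_less_iff field_simps)
      ultimately show ?thesis using that by blast
    qed
    have "?d \<ge> 0" using dd_pos[OF xy(1) w K_gt W_sub] by (smt (verit) powr_ge_zero)
    then have "?d powr \<nu> \<le> r powr \<nu>" using le \<nu>_pos by (intro powr_mono2) auto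
    then have "C * ?d powr \<nu> \<le> C * r powr \<nu>" using xy(5) by (intro mult_left_mono)
    moreover have "dist (ft x) (ft y) \<le> C * ?d powr \<nu>"
      using holder[OF rpt_frac[OF xy(2)] lpt_frac[OF xy(3)]] ftr[OF xy(2)] ftl[OF xy(3)] dd[OF xy(1)]
      by simp
    ultimately show ?thesis by linarith
  qed
  have main: "dist (ft a) (ft b) \<le> 2 * C / M powr (\<nu> / \<alpha>) * (b - a) powr (\<nu> / \<alpha>)"
    if ab: "a < b" "a \<in> I" "b \<in> I" for a b
  proof -
    define \<delta> where "\<delta> = b - a"
    have \<delta>: "\<delta> > 0" using ab by (simp add: \<delta>_def)
    have Cnn: "C \<ge> 0"
    proof (rule ccontr)
      assume "\<not> C \<ge> 0"
      obtain w where w: "w \<in> W" "a < w" "w < b"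
      proof -
        have "(a+b)/2 \<in> I" using mid_in ab I_int by blast
        then have "(a+b)/2 \<in> closure W" using W_dense by auto
        then obtain w where "w \<in> W" "dist w ((a+b)/2) < (b-a)/2"
          using ab(1) unfolding closure_approachable by (metis diff_gt_0_iff_gt half_gt_zero)
        moreover from this(2) have "a < w" by (auto simp: dist_real_def abs_less_iff field_simps)
      moreover from calculation(2) have "w < b" by (auto simp: dist_real_def abs_less_iff field_simps)
        ultimately show ?thesis using that by blast
      qed
      let ?d = "div_dist_ord K I W gr (rpt W a) (lpt W b)"
      have "?d > 0" using dd_pos[OF ab(1) w K_gt W_sub] K_gt by (smt (verit) powr_gt_zero)
      then have "?d powr \<nu> > 0" by simp
      then have "C * ?d powr \<nu> < 0" using \<open>\<not> C \<ge> 0\<close> by (simp add: mult_neg_pos)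
      moreover have "dist (ft a) (ft b) \<le> C * ?d powr \<nu>"
        using holder[OF rpt_frac[OF ab(2)] lpt_frac[OF ab(3)]] ftr[OF ab(2)] ftl[OF ab(3)] dd[OF ab(1)]
        by simp
      ultimately show False by (smt (verit) zero_le_dist)
    qed
    define r0 where "r0 = (\<delta> / M) powr (1 / \<alpha>)"
    have r0pos: "r0 > 0" using \<delta> M_pos by (simp add: r0_def)
    have r0a: "r0 powr \<alpha> = \<delta> / M" unfolding r0_def using \<alpha>_pos \<delta> M_pos
      by (simp add: powr_powr)
    have bound: "dist (ft a) (ft b) \<le> 2 * C * r powr \<nu>" if r: "r > r0" for r
    proof -
      have rpos: "r > 0" using r r0pos by linarith
      have "r0 powr \<alpha> < r powr \<alpha>" using r r0pos \<alpha>_pos by (intro powr_less_mono2) auto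
      then have big: "\<delta> < M * r powr \<alpha>" using r0a M_pos by (simp add: field_simps)
      have uniq: False if "u \<in> W" "v \<in> W" "u \<noteq> v" "a < u" "u < b" "a < v" "v < b"
          "K powr (- real (gr u)) \<ge> r" "K powr (- real (gr v)) \<ge> r" for u v
      proof -
        have "M * r powr \<alpha> \<le> \<bar>u - v\<bar>" using that by (intro gapl[OF rpos]) (auto simp: W_ge_def)
        moreover have "\<bar>u - v\<bar> < \<delta>" using that by (auto simp: \<delta>_def)
        ultimately show False using big by linarith
      qed
      show ?thesis
      proof (cases "\<exists>w\<in>W. a < w \<and> w < b \<and> K powr (- real (gr w)) \<ge> r")
        case False
        then have "dist (ft a) (ft b) \<le> C * r powr \<nu>"
          using ab rpos Cnn by (intro est) (auto simp: not_le)
        moreover have "C * r powr \<nu> \<ge> 0" using Cnn by simp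
        ultimately show ?thesis by linarith
      next
        case True
        then obtain w where w: "w \<in> W" "a < w" "w < b" "K powr (- real (gr w)) \<ge> r" by blast
        have wI: "w \<in> I" using w W_sub by auto
        have 1: "dist (ft a) (ft w) \<le> C * r powr \<nu>"
          using ab wI rpos Cnn w uniq[of w] by (intro est) (auto simp: not_le, force)
        have 2: "dist (ft w) (ft b) \<le> C * r powr \<nu>"
          using ab wI rpos Cnn w uniq[of w] by (intro est) (auto simp: not_le, force)
        have "dist (ft a) (ft b) \<le> dist (ft a) (ft w) + dist (ft w) (ft b)" by (rule dist_triangle)
        then show ?thesis using 1 2 by linarith
      qed
    qed
    have lim: "((\<lambda>r. 2 * C * r powr \<nu>) \<longlongrightarrow> 2 * C * r0 powr \<nu>) (at_right r0)"
      using r0pos by (intro tendsto_intros) auto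
    have "dist (ft a) (ft b) \<le> 2 * C * r0 powr \<nu>"
      by (rule tendsto_lowerbound[OF lim]) (auto intro: eventually_mono[OF eventually_at_right_less] bound)
    also have "r0 powr \<nu> = \<delta> powr (\<nu>/\<alpha>) / M powr (\<nu>/\<alpha>)"
      unfolding r0_def using \<delta> M_pos by (simp add: powr_powr powr_divide)
    finally show ?thesis by (simp add: \<delta>_def)
  qed
  show ?thesis
  proof (intro ballI)
    fix a b assume a: "a \<in> I" and b: "b \<in> I"
    consider "a < b" | "a = b" | "b < a" by linarith
    then show "dist (ft a) (ft b) \<le> 2 * C / M powr (\<nu> / \<alpha>) * \<bar>b - a\<bar> powr (\<nu> / \<alpha>)"
    proof cases
      case 1 then show ?thesis using main[OF 1 a b] by simp
    next
      case 2 then show ?thesis by simp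
    next
      case 3 then show ?thesis using main[OF 3 b a] by (simp add: dist_commute abs_minus_commute)
    qed
  qed
qed

end
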